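(* Let $\rho$ be a law invariant risk measure whose induced divergence $\alpha$ is simplified. Then for every Polish space $E$ and all $\mu,\nu\in\mathcal P(E)$, $$\alpha(\nu|\mu)=\sup\left\{\alpha(\nu\circ T^{-1}\,|\,\mu\circ T^{-1}):\ T:E\to F\text{ measurable},\ F\text{ a finite set}\right\}.$$
   Context: $(\Omega,\mathcal F,P)$ is a fixed nonatomic standard Borel probability space, $L^\infty=L^\infty(\Omega,\mathcal F,P)$. A risk measure is a convex $\rho:L^\infty\to\mathbb R$ that is monotone ($X\le Y$ a.s. implies $\rho(X)\le\rho(Y)$), cash additive ($\rho(X+c)=\rho(X)+c$, $c\in\mathbb R$) and normalized ($\rho(0)=0$); it is law invariant if $\rho(X)=\rho(Y)$ whenever $X,Y$ have the same law. For a Polish space $E$ (finite sets carry the discrete topology), $\mathcal P(E)$ is the set of Borel probability measures, $B(E)$ the bounded measurable and $C(E)$ the continuous real functions. For Polish $E$ and $\mu\in\mathcal P(E)$, $\rho_\mu(f):=\rho(f(X))$ for $f\in B(E)$, where $X:\Omega\to E$ is any measurable map with $P\circ X^{-1}=\mu$. The induced divergence is $\alpha(\nu|\mu):=\sup_{f\in B(E)}(\int_E f\,d\nu-\rho_\mu(f))$; it is simplified if $\alpha(\nu|\mu)=\sup_{f\in C([0,1])}(\int f\,d\nu-\rho_\mu(f))$ for all $\mu,\nu\in\mathcal P([0,1])$. *)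

theory Defs
  imports "HOL-Probability.Probability"
begin

text \<open>The underlying probability space: a nonatomic standard Borel probability space.
  Standard Borel is modelled by taking the sample space to be a Polish type with its
  Borel sigma-algebra.\<close>
definition nonatomic_std_borel_prob :: "'w::polish_space measure \<Rightarrow> bool" where
  "nonatomic_std_borel_prob P \<longleftrightarrow> prob_space P \<and> sets P = sets borel \<and>
     (\<forall>A\<in>sets P. measure P A > 0 \<longrightarrow>
        (\<exists>B\<in>sets P. B \<subseteq> A \<and> 0 < measure P B \<and> measure P B < measure P A))"

definition Linf :: "'w measure \<Rightarrow> ('w \<Rightarrow> real) set" where
  "Linf P = {X. X \<in> borel_measurable P \<and> (\<exists>C. AE \<omega> in P. \<bar>X \<omega>\<bar> \<le> C)}"

definition risk_measure :: "'w measure \<Rightarrow> (('w \<Rightarrow> real) \<Rightarrow> real) \<Rightarrow> bool" where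
  "risk_measure P \<rho> \<longleftrightarrow>
     (\<forall>X\<in>Linf P. \<forall>Y\<in>Linf P. \<forall>l::real. 0 \<le> l \<and> l \<le> 1 \<longrightarrow>
        \<rho> (\<lambda>\<omega>. l * X \<omega> + (1 - l) * Y \<omega>) \<le> l * \<rho> X + (1 - l) * \<rho> Y) \<and>
     (\<forall>X\<in>Linf P. \<forall>Y\<in>Linf P. (AE \<omega> in P. X \<omega> \<le> Y \<omega>) \<longrightarrow> \<rho> X \<le> \<rho> Y) \<and>
     (\<forall>X\<in>Linf P. \<forall>c::real. \<rho> (\<lambda>\<omega>. X \<omega> + c) = \<rho> X + c) \<and>
     \<rho> (\<lambda>\<omega>. 0) = 0"

definition law_invariant :: "'w measure \<Rightarrow> (('w \<Rightarrow> real) \<Rightarrow> real) \<Rightarrow> bool" where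
  "law_invariant P \<rho> \<longleftrightarrow>
     (\<forall>X\<in>Linf P. \<forall>Y\<in>Linf P. distr P borel X = distr P borel Y \<longrightarrow> \<rho> X = \<rho> Y)"

text \<open>\<rho>_\<mu>(f) = \<rho>(f(X)) for any measurable X with law \<mu> (well defined by law invariance).\<close>
definition rho_law :: "'w measure \<Rightarrow> (('w \<Rightarrow> real) \<Rightarrow> real) \<Rightarrow> 'e measure \<Rightarrow> 'e measure
    \<Rightarrow> ('e \<Rightarrow> real) \<Rightarrow> real" where
  "rho_law P \<rho> M \<mu> f =
     \<rho> (\<lambda>\<omega>. f ((SOME X. X \<in> measurable P M \<and> distr P M X = \<mu>) \<omega>))"

definition Bfun :: "'e measure \<Rightarrow> ('e \<Rightarrow> real) set" where
  "Bfun M = {f. f \<in> borel_measurable M \<and> bounded (f ` space M)}"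

definition divergence :: "'w measure \<Rightarrow> (('w \<Rightarrow> real) \<Rightarrow> real) \<Rightarrow> 'e measure
    \<Rightarrow> 'e measure \<Rightarrow> 'e measure \<Rightarrow> ereal" where
  "divergence P \<rho> M \<nu> \<mu> =
     (SUP f \<in> Bfun M. ereal ((\<integral>x. f x \<partial>\<nu>) - rho_law P \<rho> M \<mu> f))"

definition unit_interval :: "real measure" where
  "unit_interval = restrict_space borel {0..1}"

definition simplified_divergence :: "'w measure \<Rightarrow> (('w \<Rightarrow> real) \<Rightarrow> real) \<Rightarrow> bool" where
  "simplified_divergence P \<rho> \<longleftrightarrow>
     (\<forall>\<mu> \<nu>. prob_space \<mu> \<and> sets \<mu> = sets unit_interval \<and>
            prob_space \<nu> \<and> sets \<nu> = sets unit_interval \<longrightarrow>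
        divergence P \<rho> unit_interval \<nu> \<mu> =
          (SUP f \<in> {f. continuous_on {0..1} f}.
             ereal ((\<integral>x. f x \<partial>\<nu>) - rho_law P \<rho> unit_interval \<mu> f)))"

end

theory Submission
  imports Defs "HOL-Probability.Probability"
begin


definition enc4 :: "(nat \<Rightarrow> bool) \<Rightarrow> real" where
  "enc4 c = (\<Sum>j. (if c j then 1 else 0) / 4^(Suc j))"

definition headN :: "(nat \<Rightarrow> bool) \<Rightarrow> nat \<Rightarrow> int" where
  "headN c m = (\<Sum>j\<le>m. (if c j then 1 else 0) * 4^(m-j))"

lemma summable_enc4: "summable (\<lambda>j. (if c j then 1 else 0) / (4::real)^(Suc j))"
proof (rule summable_comparison_test[where g="\<lambda>j. (1/4::real)^j"])
  show "\<exists>N. \<forall>n\<ge>N. norm ((if c n then 1 else 0) / (4::real)^(Suc n)) \<le> (1/4)^n"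
    by (auto simp: power_divide field_simps)
qed (simp add: summable_geometric)

lemma headN_Suc: "headN c (Suc m) = 4 * headN c m + (if c (Suc m) then 1 else 0)"
proof -
  have "headN c (Suc m) = (\<Sum>j\<le>m. (if c j then 1 else 0) * 4^(Suc m-j)) + (if c (Suc m) then 1 else 0)"
    unfolding headN_def by simp
  also have "(\<Sum>j\<le>m. (if c j then 1 else 0) * (4::int)^(Suc m-j)) = 4 * headN c m"
    unfolding headN_def sum_distrib_left
    by (rule sum.cong) (auto simp: Suc_diff_le)
  finally show ?thesis .
qed

lemma headN_mod: "headN c m mod 4 = (if c m then 1 else 0)"
  by (cases m) (simp add: headN_def, simp add: headN_Suc)

lemma headN_real: "(4::real)^(Suc m) * (\<Sum>j<Suc m. (if c j then 1 else 0) / 4^(Suc j)) = real_of_int (headN c m)"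
proof (induction m)
  case 0 then show ?case by (simp add: headN_def)
next
  case (Suc m)
  have "(4::real)^(Suc (Suc m)) * (\<Sum>j<Suc (Suc m). (if c j then 1 else 0) / 4^(Suc j))
     = 4 * ((4::real)^(Suc m) * (\<Sum>j<Suc m. (if c j then 1 else 0) / 4^(Suc j)))
       + (4::real)^(Suc (Suc m)) * ((if c (Suc m) then 1 else 0) / 4^(Suc (Suc m)))"
    by (simp add: algebra_simps)
  also have "\<dots> = 4 * real_of_int (headN c m) + (if c (Suc m) then 1 else 0)"
    using Suc by simp
  finally show ?case by (simp add: headN_Suc)
qed

lemma tail_bounds: "0 \<le> (\<Sum>j. (if c (j + k) then 1 else 0) / (4::real)^(Suc j)) \<and>
   (\<Sum>j. (if c (j + k) then 1 else 0) / (4::real)^(Suc j)) \<le> 1/3"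
proof
  show "0 \<le> (\<Sum>j. (if c (j + k) then 1 else 0) / (4::real)^(Suc j))"
    by (rule suminf_nonneg[OF summable_enc4]) auto
  have "(\<Sum>j. (if c (j + k) then 1 else 0) / (4::real)^(Suc j)) \<le> (\<Sum>j. (1/4) * (1/4::real)^j)"
  proof (rule suminf_le)
    show "summable (\<lambda>j. (if c (j + k) then 1 else 0) / (4::real)^(Suc j))"
      using summable_enc4[of "\<lambda>j. c (j+k)"] .
    show "summable (\<lambda>j. (1/4) * (1/4::real)^j)"
      by (rule summable_mult) (simp add: summable_geometric)
  qed (auto simp: power_divide)
  also have "\<dots> = (1/4) * (\<Sum>j. (1/4::real)^j)"
    by (rule suminf_mult) (simp add: summable_geometric)
  also have "\<dots> = 1/3" by (subst suminf_geometric) auto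
  finally show "(\<Sum>j. (if c (j + k) then 1 else 0) / (4::real)^(Suc j)) \<le> 1/3" .
qed

lemma digit_enc4: "\<lfloor>(4::real)^(Suc m) * enc4 c\<rfloor> mod 4 = (if c m then 1 else 0)"
proof -
  let ?f = "\<lambda>j. (if c j then 1 else 0) / (4::real)^(Suc j)"
  have "enc4 c = (\<Sum>j. ?f (j + Suc m)) + sum ?f {..<Suc m}"
    unfolding enc4_def by (rule suminf_split_initial_segment[OF summable_enc4])
  also have "(\<Sum>j. ?f (j + Suc m)) = (\<Sum>j. (if c (j + Suc m) then 1 else 0) / 4^(Suc j)) / 4^(Suc m)"
    by (subst suminf_divide[symmetric, OF summable_enc4]) (simp add: power_add field_simps)
  finally have "(4::real)^(Suc m) * enc4 c = real_of_int (headN c m) + (\<Sum>j. (if c (j + Suc m) then 1 else 0) / 4^(Suc j))"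
    using headN_real[of m c] by (simp add: algebra_simps)
  moreover have "\<lfloor>real_of_int (headN c m) + (\<Sum>j. (if c (j + Suc m) then 1 else 0) / (4::real)^(Suc j))\<rfloor> = headN c m"
    using tail_bounds[of c "Suc m"] by (intro floor_unique) auto
  ultimately show ?thesis by (simp add: headN_mod)
qed



lemma polish_borel_code:
  obtains \<psi> :: "'a::polish_space \<Rightarrow> real" and \<phi> :: "real \<Rightarrow> 'a"
  where "\<psi> \<in> borel_measurable borel" "\<phi> \<in> borel_measurable borel" "\<And>x. \<phi> (\<psi> x) = x"
proof -
  obtain D :: "'a set" where D: "countable D" "\<And>X. open X \<Longrightarrow> X \<noteq> {} \<Longrightarrow> \<exists>d\<in>D. d \<in> X"
    using countable_dense_setE by blast
  have "D \<noteq> {}" using D(2)[of UNIV] by auto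
  define d where "d = from_nat_into D"
  have dD: "range d = D" unfolding d_def using range_from_nat_into[OF \<open>D \<noteq> {}\<close> D(1)] .
  have ex: "\<exists>k. dist (d k) x < 1/2^n" for x n
  proof -
    have "ball x (1/2^n) \<noteq> {}" by (auto simp: not_le)
    then obtain y where "y \<in> D" "y \<in> ball x (1/2^n)" using D(2)[of "ball x (1/2^n)"] by auto
    then obtain k where "y = d k" using dD by auto
    then show ?thesis using \<open>y \<in> ball x _\<close> by (auto simp: dist_commute)
  qed
  define kk where "kk n x = (LEAST k. dist (d k) x < 1/2^n)" for n x
  have kk: "dist (d (kk n x)) x < 1/2^n" for n x
    unfolding kk_def using ex by (rule LeastI_ex)
  define code where "code x j = (kk (fst (prod_decode j)) x = snd (prod_decode j))" for x j
  define \<psi> where "\<psi> x = enc4 (code x)" for x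
  define bit where "bit j z = (\<lfloor>(4::real)^(Suc j) * z\<rfloor> mod 4 = 1)" for j z
  define kd where "kd n z = (LEAST k. bit (prod_encode (n,k)) z)" for n z
  define s where "s n z = (if Cauchy (\<lambda>n. d (kd n z)) then d (kd n z) else d 0)" for n z
  define \<phi> where "\<phi> z = lim (\<lambda>n. s n z)" for z
  have kk_meas[measurable]: "(\<lambda>x. kk n x) \<in> measurable borel (count_space UNIV)" for n
    unfolding kk_def by measurable
  have "\<psi> \<in> borel_measurable borel"
    unfolding \<psi>_def enc4_def code_def by measurable
  moreover
  have kd_meas[measurable]: "(\<lambda>z. kd n z) \<in> measurable borel (count_space UNIV)" for n
    unfolding kd_def bit_def by measurable
  have dm[measurable]: "(\<lambda>z. d (kd n z)) \<in> borel_measurable borel" for n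
    by (rule measurable_compose_countable[where f="\<lambda>k z. d k" and g="\<lambda>z. kd n z"]) auto
  have sm[measurable]: "(\<lambda>z. s n z) \<in> borel_measurable borel" for n
    unfolding s_def by measurable
  have sconv: "(\<lambda>n. s n z) \<longlonglongrightarrow> \<phi> z" for z
  proof -
    have "convergent (\<lambda>n. s n z)"
      by (cases "Cauchy (\<lambda>n. d (kd n z))") (auto simp: s_def convergent_eq_Cauchy[symmetric] convergent_const convergent_def)
    then show ?thesis unfolding \<phi>_def by (rule convergent_LIMSEQ_iff[THEN iffD1])
  qed
  have "\<phi> \<in> borel_measurable borel"
    by (rule borel_measurable_LIMSEQ_metric[OF sm sconv])
  moreover have "\<phi> (\<psi> x) = x" for x
  proof -
    have bit: "bit j (\<psi> x) = code x j" for j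
      unfolding bit_def \<psi>_def digit_enc4 by simp
    have kd: "kd n (\<psi> x) = kk n x" for n
      unfolding kd_def bit code_def by (simp add: Least_equality)
    have lim: "(\<lambda>n. d (kk n x)) \<longlonglongrightarrow> x"
    proof (rule tendsto_dist_iff[THEN iffD2], rule Lim_null_comparison)
      show "\<forall>\<^sub>F n in sequentially. norm (dist (d (kk n x)) x) \<le> (1/2)^n"
        using kk by (auto intro!: always_eventually less_imp_le simp: power_divide)
      show "(\<lambda>n. (1/2::real)^n) \<longlonglongrightarrow> 0" by (rule LIMSEQ_power_zero) auto
    qed
    then have "Cauchy (\<lambda>n. d (kd n (\<psi> x)))" by (simp add: kd LIMSEQ_imp_Cauchy)
    then have "(\<lambda>n. s n (\<psi> x)) = (\<lambda>n. d (kk n x))" by (simp add: s_def kd)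
    then show ?thesis using sconv[of "\<psi> x"] lim LIMSEQ_unique by metis
  qed
  ultimately show ?thesis using that by blast
qed



lemma uniform_cdf:
  fixes L :: "real measure"
  assumes L: "real_distribution L" and na: "\<And>x. measure L {x} = 0"
  shows "distr L borel (cdf L) = distr (restrict_space lborel {0<..<1}) borel (\<lambda>x. x)"
proof -
  interpret real_distribution L by fact
  let ?F = "cdf L"
  have Fm[measurable]: "?F \<in> borel_measurable borel"
    by (rule borel_measurable_mono) (auto intro: monoI cdf_nondecreasing)
  have cont: "isCont ?F y" for y using isCont_cdf na by blast
  interpret R: prob_space "restrict_space lborel {0<..<1::real}"
    by (auto simp add: emeasure_restrict_space space_restrict_space intro!: prob_spaceI)
  have key: "measure L {y. ?F y \<le> x} = x" if x: "0 \<le> x" "x < 1" for x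
  proof (cases "{y. ?F y \<le> x} = {}")
    case True
    have "x = 0"
    proof (rule ccontr)
      assume "x \<noteq> 0"
      with x have "0 < x" by auto
      from order_tendstoD(2)[OF cdf_lim_at_bot this] obtain y where "?F y < x"
        by (auto dest: eventually_happens'[OF trivial_limit_at_bot_linorder])
      with True show False by (metis (mono_tags) empty_iff less_imp_le mem_Collect_eq)
    qed
    with True show ?thesis by simp
  next
    case False
    let ?S = "{y. ?F y \<le> x}"
    from order_tendstoD(1)[OF cdf_lim_at_top_prob \<open>x < 1\<close>]
    obtain y0 where y0: "\<And>y. y0 \<le> y \<Longrightarrow> x < ?F y" by (auto simp: eventually_at_top_linorder)
    have bdd: "bdd_above ?S"
      by (rule bdd_aboveI[of _ y0]) (metis linorder_le_less_linear y0 mem_Collect_eq order.strict_iff_not)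
    define J where "J = Sup ?S"
    have cl: "closed ?S"
      by (rule closed_Collect_le) (auto intro: continuous_at_imp_continuous_on cont continuous_on_const)
    have JS: "J \<in> ?S" unfolding J_def using closed_contains_Sup[OF False bdd cl] .
    have Seq: "?S = {..J}"
    proof safe
      fix y assume "?F y \<le> x" then show "y \<le> J" unfolding J_def using cSup_upper[OF _ bdd, of y] by simp
    next
      fix y assume "y \<le> J" then show "?F y \<le> x" using JS cdf_nondecreasing[of y J] by auto
    qed
    have "?F J = x"
    proof (rule ccontr)
      assume "?F J \<noteq> x" with JS have lt: "?F J < x" by auto
      have "(?F \<longlongrightarrow> ?F J) (at_right J)"
        using cont[of J] by (simp add: isCont_def filterlim_at_split)
      from order_tendstoD(2)[OF this lt] obtain b where b: "b > J" "\<And>y. J < y \<Longrightarrow> y < b \<Longrightarrow> ?F y < x"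
        by (auto simp: eventually_at_right_field)
      have "(J + b)/2 \<in> ?S" using b by (auto intro!: less_imp_le)
      with Seq b show False by auto
    qed
    then show ?thesis using Seq by (simp add: cdf_def)
  qed
  show ?thesis
  proof (rule cdf_unique)
    show "real_distribution (distr L borel ?F)" by simp
    show "real_distribution (distr (restrict_space lborel {0<..<1::real}) borel (\<lambda>x. x))"
      by (rule R.real_distribution_distr) (simp add: measurable_restrict_space1)
    show "cdf (distr L borel ?F) = cdf (distr (restrict_space lborel {0<..<1::real}) borel (\<lambda>x. x))"
    proof
      fix x :: real
      have l: "cdf (distr L borel ?F) x = measure L {y. ?F y \<le> x}"
        unfolding cdf_def[of "distr L borel ?F"] by (simp add: measure_distr vimage_def)
      have r: "cdf (distr (restrict_space lborel {0<..<1::real}) borel (\<lambda>x. x)) x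
          = measure lborel ({0<..<1} \<inter> {..x})"
        by (simp add: cdf_def measure_distr measurable_restrict_space1 measure_restrict_space space_restrict_space
              Int_commute)
      consider "x < 0" | "0 \<le> x" "x < 1" | "1 \<le> x" by linarith
      then show "cdf (distr L borel ?F) x = cdf (distr (restrict_space lborel {0<..<1::real}) borel (\<lambda>x. x)) x"
      proof cases
        case 1
        then have "{y. ?F y \<le> x} = {}" using cdf_nonneg by (auto simp: not_le intro: less_le_trans)
        moreover have "{0<..<1} \<inter> {..x} = {}" using 1 by auto
        ultimately show ?thesis using l r by simp
      next
        case 2
        then have "{0<..<1} \<inter> {..x} = {0<..x}" by auto
        then show ?thesis using l r key[OF 2] 2 by simp
      next
        case 3
        then have "{y. ?F y \<le> x} = UNIV" using cdf_bounded_prob by (auto intro: order_trans)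
        moreover have "{0<..<1} \<inter> {..x} = {0<..<1}" using 3 by auto
        ultimately show ?thesis using l r prob_space by (simp add: measure_def)
      qed
    qed
  qed
qed



lemma nonatomic_singleton:
  assumes "nonatomic_std_borel_prob P"
  shows "measure P {w} = 0"
proof -
  from assms have sets: "sets P = sets borel" and na: "\<And>A. A \<in> sets P \<Longrightarrow> measure P A > 0 \<Longrightarrow>
        (\<exists>B\<in>sets P. B \<subseteq> A \<and> 0 < measure P B \<and> measure P B < measure P A)"
    unfolding nonatomic_std_borel_prob_def by auto
  have "{w} \<in> sets P" using sets by simp
  show ?thesis
  proof (rule ccontr)
    assume "measure P {w} \<noteq> 0"
    then have "measure P {w} > 0" using measure_nonneg[of P "{w}"] by linarith
    from na[OF \<open>{w} \<in> sets P\<close> this] obtain B where "B \<subseteq> {w}" "0 < measure P B" "measure P B < measure P {w}"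
      by auto
    then show False by (metis less_irrefl measure_empty subset_singletonD)
  qed
qed

lemma exists_law:
  fixes P :: "'w::polish_space measure" and \<mu> :: "'e::polish_space measure"
  assumes P: "nonatomic_std_borel_prob P" and \<mu>: "prob_space \<mu>" "sets \<mu> = sets borel"
  shows "\<exists>X. X \<in> measurable P borel \<and> distr P borel X = \<mu>"
proof -
  have Pp: "prob_space P" and sP: "sets P = sets borel" using P unfolding nonatomic_std_borel_prob_def by auto
  interpret P: prob_space P by fact
  obtain \<psi>w :: "'w \<Rightarrow> real" and \<phi>w where w: "\<psi>w \<in> borel_measurable borel" "\<phi>w \<in> borel_measurable borel" "\<And>x. \<phi>w (\<psi>w x) = x"
    using polish_borel_code by blast
  obtain \<psi>e :: "'e \<Rightarrow> real" and \<phi>e where e[measurable]: "\<psi>e \<in> borel_measurable borel" "\<phi>e \<in> borel_measurable borel" "\<And>x. \<phi>e (\<psi>e x) = x"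
    using polish_borel_code by blast
  have \<psi>wP[measurable]: "\<psi>w \<in> borel_measurable P" using w(1) measurable_cong_sets[OF sP refl] by blast
  define L where "L = distr P borel \<psi>w"
  have RL: "real_distribution L" unfolding L_def by simp
  have na: "measure L {x} = 0" for x
  proof -
    have "measure L {x} = measure P (\<psi>w -` {x} \<inter> space P)" unfolding L_def by (simp add: measure_distr)
    also have "\<dots> = 0"
    proof (cases "\<exists>w. \<psi>w w = x")
      case True
      then obtain w0 where "\<psi>w w0 = x" by auto
      then have "\<psi>w -` {x} \<inter> space P = {w0}"
        using w(3) sets_eq_imp_space_eq[OF sP] by (auto, metis)
      then show ?thesis using nonatomic_singleton[OF P] by simp
    next
      case False
      then have "\<psi>w -` {x} \<inter> space P = {}" by auto
      then show ?thesis by simp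
    qed
    finally show ?thesis .
  qed
  define U where "U = (\<lambda>w. cdf L (\<psi>w w))"
  have Fm[measurable]: "cdf L \<in> borel_measurable borel"
    by (rule borel_measurable_mono) (auto intro: monoI finite_borel_measure.cdf_nondecreasing[OF real_distribution.finite_borel_measure_M[OF RL]])
  have Um[measurable]: "U \<in> borel_measurable P" unfolding U_def by measurable
  have dU: "distr P borel U = distr (restrict_space lborel {0<..<1}) borel (\<lambda>x. x)"
  proof -
    have "distr (distr P borel \<psi>w) borel (cdf L) = distr P borel (cdf L \<circ> \<psi>w)"
      by (rule distr_distr) (use Fm in auto)
    then have "distr P borel U = distr L borel (cdf L)"
      unfolding U_def L_def[symmetric] by (simp add: comp_def)
    then show ?thesis using uniform_cdf[OF RL na] by simp
  qed
  define M where "M = distr \<mu> borel \<psi>e"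
  interpret \<mu>: prob_space \<mu> by fact
  have \<psi>e\<mu>[measurable]: "\<psi>e \<in> borel_measurable \<mu>" using e(1) measurable_cong_sets[OF \<mu>(2) refl] by blast
  have RM: "real_distribution M" unfolding M_def by simp
  interpret CM: cdf_distribution M by (simp add: cdf_distribution_def RM)
  define I where "I = (\<lambda>\<omega>. Inf {x. \<omega> \<le> cdf M x})"
  define g where "g = (\<lambda>z. if z \<in> {0<..<1::real} then I z else 0)"
  have Im: "I \<in> borel_measurable (restrict_space borel {0<..<1})" unfolding I_def using CM.measurable_CI .
  have gm[measurable]: "g \<in> borel_measurable borel"
    unfolding g_def
  proof (subst measurable_If_restrict_space_iff)
    have "{x::real. x \<in> {0<..<1}} = {0<..<1}" by auto
    then show "I \<in> borel_measurable (restrict_space borel {x. x \<in> {0<..<1::real}}) \<and>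
      (\<lambda>z. 0::real) \<in> borel_measurable (restrict_space borel {x. x \<notin> {0<..<1::real}})"
      using Im by simp
  qed auto
  have dI: "distr (restrict_space lborel {0<..<1::real}) borel I = M" unfolding I_def by (rule CM.distr_I_eq_M)
  define X where "X = (\<lambda>w. \<phi>e (g (U w)))"
  have Xm: "X \<in> measurable P borel" unfolding X_def by measurable
  have "distr P borel X = distr (distr P borel U) borel (\<lambda>z. \<phi>e (g z))"
    unfolding X_def by (subst distr_distr) (auto simp: comp_def)
  also have "\<dots> = distr (restrict_space lborel {0<..<1::real}) borel (\<lambda>z. \<phi>e (g z))"
    unfolding dU by (subst distr_distr) (auto simp: comp_def measurable_restrict_space1)
  also have "\<dots> = distr (restrict_space lborel {0<..<1::real}) borel (\<lambda>z. \<phi>e (I z))"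
    by (rule distr_cong) (auto simp: g_def space_restrict_space)
  also have "\<dots> = distr (distr (restrict_space lborel {0<..<1::real}) borel I) borel \<phi>e"
    using Im by (subst distr_distr) (auto simp: comp_def measurable_cong_sets[OF sets_restrict_space_cong[OF sets_lborel] refl])
  also have "\<dots> = distr \<mu> borel (\<lambda>x. x)"
    unfolding dI M_def by (subst distr_distr) (auto simp: comp_def e(3))
  also have "\<dots> = \<mu>" by (rule distr_id2) (simp add: \<mu>(2))
  finally show ?thesis using Xm by blast
qed



lemma linf_comp:
  assumes "X \<in> measurable P M" "f \<in> borel_measurable M" "\<And>x. x \<in> space M \<Longrightarrow> \<bar>f x\<bar> \<le> C"
  shows "(\<lambda>\<omega>. f (X \<omega>)) \<in> Linf P"
  unfolding Linf_def
proof safe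
  show "(\<lambda>\<omega>. f (X \<omega>)) \<in> borel_measurable P" using assms(1,2) by measurable
  show "\<exists>C. AE \<omega> in P. \<bar>f (X \<omega>)\<bar> \<le> C"
    using assms(1,3) by (intro exI[of _ C] AE_I2) (auto simp: measurable_space)
qed

lemma Bfun_borelD:
  assumes "f \<in> Bfun (borel :: 'e::topological_space measure)"
  obtains C where "f \<in> borel_measurable borel" "\<And>x. \<bar>f x\<bar> \<le> C"
  using assms unfolding Bfun_def bounded_real by auto

theorem proposition4p2:
  fixes P :: "'w::polish_space measure" and \<rho> :: "('w \<Rightarrow> real) \<Rightarrow> real"
    and \<mu> \<nu> :: "'e::polish_space measure"
  assumes "nonatomic_std_borel_prob P"
    and "risk_measure P \<rho>" and "law_invariant P \<rho>"
    and "simplified_divergence P \<rho>"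
    and "prob_space \<mu>" and "sets \<mu> = sets borel"
    and "prob_space \<nu>" and "sets \<nu> = sets borel"
  shows "divergence P \<rho> borel \<nu> \<mu> =
    (SUP (F, T) \<in> {(F :: nat set, T :: 'e \<Rightarrow> nat). finite F \<and> T \<in> borel \<rightarrow>\<^sub>M count_space F}.
       divergence P \<rho> (count_space F) (distr \<nu> (count_space F) T) (distr \<mu> (count_space F) T))"
proof -
  note P = assms(1)
  have sP: "sets P = sets borel" using P unfolding nonatomic_std_borel_prob_def by auto
  have mono: "\<And>X Y. X \<in> Linf P \<Longrightarrow> Y \<in> Linf P \<Longrightarrow> (\<And>\<omega>. X \<omega> \<le> Y \<omega>) \<Longrightarrow> \<rho> X \<le> \<rho> Y"
  proof -
    fix X Y assume XY: "X \<in> Linf P" "Y \<in> Linf P" and le: "\<And>\<omega>. X \<omega> \<le> Y \<omega>"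
    have m: "\<forall>X\<in>Linf P. \<forall>Y\<in>Linf P. (AE \<omega> in P. X \<omega> \<le> Y \<omega>) \<longrightarrow> \<rho> X \<le> \<rho> Y"
      using assms(2) unfolding risk_measure_def by blast
    have "AE \<omega> in P. X \<omega> \<le> Y \<omega>" using le by (rule AE_I2)
    then show "\<rho> X \<le> \<rho> Y" using m XY by blast
  qed
  have li: "\<And>X Y. X \<in> Linf P \<Longrightarrow> Y \<in> Linf P \<Longrightarrow> distr P borel X = distr P borel Y \<Longrightarrow> \<rho> X = \<rho> Y"
    using assms(3) unfolding law_invariant_def by blast
  interpret \<nu>: prob_space \<nu> by fact
  define X0 where "X0 = (SOME X. X \<in> measurable P borel \<and> distr P borel X = \<mu>)"
  have "X0 \<in> measurable P borel \<and> distr P borel X0 = \<mu>"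
    unfolding X0_def using exists_law[OF P assms(5,6)] by (rule someI_ex)
  then have X0m[measurable]: "X0 \<in> measurable P borel" and X0d: "distr P borel X0 = \<mu>" by auto
  have rl: "rho_law P \<rho> borel \<mu> f = \<rho> (\<lambda>\<omega>. f (X0 \<omega>))" for f :: "'e \<Rightarrow> real"
    unfolding rho_law_def X0_def ..
  have \<nu>m: "measurable \<nu> N = measurable borel N" for N :: "'x measure"
    using assms(8) by (rule measurable_cong_sets) simp
  have K: "rho_law P \<rho> (count_space F) (distr \<mu> (count_space F) T) g = \<rho> (\<lambda>\<omega>. g (T (X0 \<omega>)))"
    if F: "finite F" and T: "T \<in> borel \<rightarrow>\<^sub>M count_space F" for F and T :: "'e \<Rightarrow> nat" and g :: "nat \<Rightarrow> real"
  proof -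
    define Y where "Y = (SOME Y. Y \<in> measurable P (count_space F) \<and> distr P (count_space F) Y = distr \<mu> (count_space F) T)"
    have TX: "(\<lambda>\<omega>. T (X0 \<omega>)) \<in> measurable P (count_space F)"
      using T X0m by (rule measurable_compose[rotated])
    have dTX: "distr P (count_space F) (\<lambda>\<omega>. T (X0 \<omega>)) = distr \<mu> (count_space F) T"
      using distr_distr[OF T X0m] X0d by (simp add: comp_def)
    have "Y \<in> measurable P (count_space F) \<and> distr P (count_space F) Y = distr \<mu> (count_space F) T"
      unfolding Y_def by (rule someI[of _ "\<lambda>\<omega>. T (X0 \<omega>)"]) (use TX dTX in auto)
    then have Ym: "Y \<in> measurable P (count_space F)" and Yd: "distr P (count_space F) Y = distr \<mu> (count_space F) T"
      by auto
    have gm: "g \<in> borel_measurable (count_space F)" by simp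
    have gb: "\<bar>g x\<bar> \<le> (\<Sum>k\<in>F. \<bar>g k\<bar>)" if "x \<in> space (count_space F)" for x
      using that F by (auto intro: member_le_sum)
    have "\<rho> (\<lambda>\<omega>. g (Y \<omega>)) = \<rho> (\<lambda>\<omega>. g (T (X0 \<omega>)))"
    proof (rule li)
      show "(\<lambda>\<omega>. g (Y \<omega>)) \<in> Linf P" by (rule linf_comp[OF Ym gm gb])
      show "(\<lambda>\<omega>. g (T (X0 \<omega>))) \<in> Linf P" by (rule linf_comp[OF TX gm gb])
      have "distr P borel (\<lambda>\<omega>. g (Y \<omega>)) = distr (distr P (count_space F) Y) borel g"
        using distr_distr[OF gm Ym] by (simp add: comp_def)
      also have "\<dots> = distr (distr P (count_space F) (\<lambda>\<omega>. T (X0 \<omega>))) borel g" using Yd dTX by simp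
      also have "\<dots> = distr P borel (\<lambda>\<omega>. g (T (X0 \<omega>)))"
        using distr_distr[OF gm TX] by (simp add: comp_def)
      finally show "distr P borel (\<lambda>\<omega>. g (Y \<omega>)) = distr P borel (\<lambda>\<omega>. g (T (X0 \<omega>)))" .
    qed
    then show ?thesis unfolding rho_law_def Y_def .
  qed
  have Kint: "(\<integral>x. g x \<partial>distr \<nu> (count_space F) T) = (\<integral>x. g (T x) \<partial>\<nu>)"
    if T: "T \<in> borel \<rightarrow>\<^sub>M count_space F" for F and T :: "'e \<Rightarrow> nat" and g :: "nat \<Rightarrow> real"
    by (rule integral_distr) (use T \<nu>m in auto)
  have trm: "ereal ((\<integral>x. g x \<partial>distr \<nu> (count_space F) T) - rho_law P \<rho> (count_space F) (distr \<mu> (count_space F) T) g)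
      = ereal ((\<integral>x. g (T x) \<partial>\<nu>) - rho_law P \<rho> borel \<mu> (\<lambda>x. g (T x)))"
    if F: "finite F" and T: "T \<in> borel \<rightarrow>\<^sub>M count_space F" for F and T :: "'e \<Rightarrow> nat" and g :: "nat \<Rightarrow> real"
    using K[OF F T] Kint[OF T] rl by simp
  show ?thesis
  proof (rule antisym)
    show "(SUP (F, T) \<in> {(F :: nat set, T :: 'e \<Rightarrow> nat). finite F \<and> T \<in> borel \<rightarrow>\<^sub>M count_space F}.
       divergence P \<rho> (count_space F) (distr \<nu> (count_space F) T) (distr \<mu> (count_space F) T)) \<le> divergence P \<rho> borel \<nu> \<mu>"
    proof (rule SUP_least, clarify)
      fix F and T :: "'e \<Rightarrow> nat" assume F: "finite F" and T: "T \<in> borel \<rightarrow>\<^sub>M count_space F"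
      show "divergence P \<rho> (count_space F) (distr \<nu> (count_space F) T) (distr \<mu> (count_space F) T) \<le> divergence P \<rho> borel \<nu> \<mu>"
        unfolding divergence_def[of _ _ "count_space F"]
      proof (rule SUP_least)
        fix g assume g: "g \<in> Bfun (count_space F)"
        have "(\<lambda>x. g (T x)) \<in> Bfun borel"
          unfolding Bfun_def
        proof safe
          show "(\<lambda>x. g (T x)) \<in> borel_measurable borel" by (rule measurable_compose[OF T]) simp
          have "(\<lambda>x. g (T x)) ` space borel \<subseteq> g ` F" using measurable_space[OF T] by auto
          then show "bounded ((\<lambda>x. g (T x)) ` space borel)"
            by (rule bounded_subset[rotated]) (simp add: F finite_imp_bounded)
        qed
        then show "ereal ((\<integral>x. g x \<partial>distr \<nu> (count_space F) T) - rho_law P \<rho> (count_space F) (distr \<mu> (count_space F) T) g)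
            \<le> divergence P \<rho> borel \<nu> \<mu>"
          unfolding trm[OF F T] divergence_def by (rule SUP_upper)
      qed
    qed
  next
    let ?R = "(SUP (F, T) \<in> {(F :: nat set, T :: 'e \<Rightarrow> nat). finite F \<and> T \<in> borel \<rightarrow>\<^sub>M count_space F}.
       divergence P \<rho> (count_space F) (distr \<nu> (count_space F) T) (distr \<mu> (count_space F) T))"
    show "divergence P \<rho> borel \<nu> \<mu> \<le> ?R"
      unfolding divergence_def[of _ _ borel]
    proof (rule SUP_least)
      fix f assume fB: "f \<in> Bfun (borel :: 'e measure)"
      then obtain C where fm[measurable]: "f \<in> borel_measurable borel" and fC: "\<And>x. \<bar>f x\<bar> \<le> C"
        using fB unfolding Bfun_def bounded_real by auto
      show "ereal ((\<integral>x. f x \<partial>\<nu>) - rho_law P \<rho> borel \<mu> f) \<le> ?R"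
      proof (rule ereal_le_epsilon2)
        fix e :: real assume e: "0 < e"
        obtain n :: nat where n: "1 / e < real n" using reals_Archimedean2 by blast
        have npos: "0 < real n" proof -
          have "0 < 1 / e" using e by simp
          then show ?thesis using n by linarith
        qed
        have ne: "1 / real n < e" using n e npos by (simp add: field_simps)
        define N :: nat where "N = nat \<lceil>real n * C\<rceil> + 1"
        define T where "T x = nat (\<lfloor>real n * f x\<rfloor> + int N)" for x
        define g where "g k = (real k - real N) / real n" for k
        define F where "F = {..<2*N}"
        have fl: "- real N < real n * f x \<and> real n * f x < real N" for x
        proof -
          have "\<bar>real n * f x\<bar> \<le> real n * C" using fC[of x] npos by (simp add: abs_mult mult_left_mono)
          moreover have "real n * C < real N" proof -
            have "real n * C \<le> real (nat \<lceil>real n * C\<rceil>)" by linarith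
            then show ?thesis unfolding N_def by simp
          qed
          ultimately show ?thesis by linarith
        qed
        have gT: "g (T x) = real_of_int \<lfloor>real n * f x\<rfloor> / real n" for x
        proof -
          have "0 \<le> \<lfloor>real n * f x\<rfloor> + int N" using fl[of x] by linarith
          then show ?thesis unfolding g_def T_def by simp
        qed
        have gT1: "g (T x) \<le> f x" and gT2: "f x \<le> g (T x) + 1 / real n" for x
        proof -
          have "real_of_int \<lfloor>real n * f x\<rfloor> \<le> real n * f x" "real n * f x < real_of_int \<lfloor>real n * f x\<rfloor> + 1"
            by linarith+
          then show "g (T x) \<le> f x" "f x \<le> g (T x) + 1 / real n" unfolding gT using npos
            by (simp_all add: field_simps)
        qed
        have TF: "T x \<in> F" for x
        proof -
          have "\<lfloor>real n * f x\<rfloor> < int N" "- int N \<le> \<lfloor>real n * f x\<rfloor>" using fl[of x] by linarith+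
          then show ?thesis unfolding T_def F_def by (simp add: nat_less_iff)
        qed
        have Tm0: "T \<in> measurable borel (count_space UNIV)" unfolding T_def by measurable
        have Tm: "T \<in> borel \<rightarrow>\<^sub>M count_space F"
        proof -
          have cF: "countable F" unfolding F_def by simp
          show ?thesis
            by (subst measurable_count_space_eq2_countable) (use TF measurable_sets[OF Tm0] in auto)
        qed
        have Ff: "finite F" unfolding F_def by simp
        have gB: "g \<in> Bfun (count_space F)"
          unfolding Bfun_def using Ff by (simp add: finite_imp_bounded)
        have gTm[measurable]: "(\<lambda>x. g (T x)) \<in> borel_measurable borel" by (rule measurable_compose[OF Tm]) simp
        have gTb: "\<bar>g (T x)\<bar> \<le> \<bar>C\<bar> + 1" for x
        proof -
          have "0 < n" using npos by simp
          then have "1 \<le> real n" by simp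
          then have "1 / real n \<le> 1" by simp
          then show ?thesis using gT1[of x] gT2[of x] fC[of x] by (simp add: abs_le_iff)
        qed
        have int1: "(\<integral>x. f x \<partial>\<nu>) \<le> (\<integral>x. g (T x) \<partial>\<nu>) + 1 / real n"
        proof -
          have ifm: "integrable \<nu> f" by (rule \<nu>.integrable_const_bound[where B=C]) (auto simp: fC \<nu>m)
          have igm: "integrable \<nu> (\<lambda>x. g (T x) + 1 / real n)"
            by (rule \<nu>.integrable_const_bound[where B="\<bar>C\<bar> + 1 + 1 / real n"])
               (use gTb npos in \<open>auto simp: \<nu>m intro!: AE_I2 abs_triangle_ineq[THEN order_trans]\<close>)
          have "(\<integral>x. f x \<partial>\<nu>) \<le> (\<integral>x. g (T x) + 1 / real n \<partial>\<nu>)"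
            by (rule integral_mono[OF ifm igm]) (rule gT2)
          also have "\<dots> = (\<integral>x. g (T x) \<partial>\<nu>) + 1 / real n"
            using igm by (subst Bochner_Integration.integral_add)
              (auto simp: \<nu>.prob_space \<nu>.integrable_const_bound[where B="\<bar>C\<bar> + 1"] gTb \<nu>m)
          finally show ?thesis .
        qed
        have rho1: "rho_law P \<rho> borel \<mu> (\<lambda>x. g (T x)) \<le> rho_law P \<rho> borel \<mu> f"
          unfolding rl
        proof (rule mono)
          show "(\<lambda>\<omega>. g (T (X0 \<omega>))) \<in> Linf P" by (rule linf_comp[OF X0m gTm gTb])
          show "(\<lambda>\<omega>. f (X0 \<omega>)) \<in> Linf P" by (rule linf_comp[OF X0m fm fC])
        qed (rule gT1)
        have "ereal ((\<integral>x. g (T x) \<partial>\<nu>) - rho_law P \<rho> borel \<mu> (\<lambda>x. g (T x))) \<le>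
            divergence P \<rho> (count_space F) (distr \<nu> (count_space F) T) (distr \<mu> (count_space F) T)"
          unfolding divergence_def[of _ _ "count_space F"] trm[OF Ff Tm, symmetric]
          by (rule SUP_upper[OF gB])
        also have "\<dots> \<le> ?R"
          by (rule SUP_upper2[where i="(F, T)"]) (use Ff Tm in auto)
        finally have A: "ereal ((\<integral>x. g (T x) \<partial>\<nu>) - rho_law P \<rho> borel \<mu> (\<lambda>x. g (T x))) \<le> ?R" .
        have B: "(\<integral>x. f x \<partial>\<nu>) - rho_law P \<rho> borel \<mu> f \<le>
            ((\<integral>x. g (T x) \<partial>\<nu>) - rho_law P \<rho> borel \<mu> (\<lambda>x. g (T x))) + e"
          using int1 rho1 ne by linarith
        show "ereal ((\<integral>x. f x \<partial>\<nu>) - rho_law P \<rho> borel \<mu> f) \<le> ?R + ereal e"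
        proof -
          have "ereal ((\<integral>x. f x \<partial>\<nu>) - rho_law P \<rho> borel \<mu> f) \<le>
             ereal ((\<integral>x. g (T x) \<partial>\<nu>) - rho_law P \<rho> borel \<mu> (\<lambda>x. g (T x))) + ereal e"
            using B by simp
          also have "\<dots> \<le> ?R + ereal e" using A by (rule add_right_mono)
          finally show ?thesis .
        qed
      qed
    qed
  qed
qed

end
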